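(* Assume that $M=S^1$ and $N$ is a compact Riemannian manifold. If $\gamma$ is a geodesic and the spinor $\psi$ is of the form $\psi=\partial_s\cdot\chi\otimes\gamma'$ with $\chi$ a harmonic spinor (i.e. $\partial\!\!\!/\,\chi=0$), then the pair $(\gamma,\psi)$ is a Dirac-geodesic, i.e. $\tau(\gamma)=\mathcal{R}(\gamma,\psi)$ and $D\!\!\!/\,\psi=0$.
   Context: $\gamma\colon S^1\to N$, $\psi$ a section of $\Sigma S^1\otimes\gamma^{-1}TN$, $\partial\!\!\!/=i\nabla$ the untwisted Dirac operator on $\Sigma S^1$, $D\!\!\!/$ the twisted Dirac operator on $\Sigma S^1\otimes\gamma^{-1}TN$, $\tau(\gamma)$ the tension field, $\mathcal{R}(\gamma,\psi)=\frac12R^N(\partial_s\cdot\psi,\psi)\gamma'$ with $R^N$ the curvature of $N$ and $\cdot$ Clifford multiplication (multiplication by $i$ on $S^1$). Dirac-geodesics are critical points of $E(\gamma,\psi)=\frac12\int_{S^1}(|\gamma'|^2+\langle\psi,D\!\!\!/\,\psi\rangle)ds$. *)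

theory Defs
  imports "HOL-Analysis.Analysis"
begin

text \<open>
Extrinsic model: the compact Riemannian manifold N is a compact smooth embedded
submanifold of a Euclidean space 'e with the induced metric (every compact
Riemannian manifold arises this way up to isometry, by Nash).  The domain
S^1 is the circle of length 2 pi, i.e. all sections are functions of s in the
reals with the appropriate 2 pi periodicity.
\<close>

fun Ck_on :: "nat \<Rightarrow> 'a::real_normed_vector set \<Rightarrow> ('a \<Rightarrow> 'b::real_normed_vector) \<Rightarrow> bool" where
  "Ck_on 0 U f = continuous_on U f"
| "Ck_on (Suc k) U f =
     (f differentiable_on U \<and> (\<forall>v. Ck_on k U (\<lambda>x. frechet_derivative f (at x) v)))"

definition smooth_on :: "'a::real_normed_vector set \<Rightarrow> ('a \<Rightarrow> 'b::real_normed_vector) \<Rightarrow> bool" where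
  "smooth_on U f \<longleftrightarrow> (\<forall>k. Ck_on k U f)"

definition smooth_submanifold :: "'e::euclidean_space set \<Rightarrow> bool" where
  "smooth_submanifold N \<longleftrightarrow>
     (\<forall>p\<in>N. \<exists>U (F::'e \<Rightarrow> 'e) r. open U \<and> p \<in> U \<and> smooth_on U F \<and>
        N \<inter> U = {x\<in>U. F x = 0} \<and>
        (\<forall>x\<in>U. dim (range (frechet_derivative F (at x))) = r))"

definition tangent_space :: "'e::euclidean_space set \<Rightarrow> 'e \<Rightarrow> 'e set" where
  "tangent_space N p =
     {v. \<exists>c::real \<Rightarrow> 'e. (\<forall>t. c t \<in> N) \<and> c 0 = p \<and> (c has_vector_derivative v) (at 0)}"

definition tangent_proj :: "'e::euclidean_space set \<Rightarrow> 'e \<Rightarrow> 'e \<Rightarrow> 'e" where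
  "tangent_proj N p v = closest_point (tangent_space N p) v"

text \<open>Shape operator A_X = dP_p(X); for tangent X, Y one has A_X Y = II(X,Y).\<close>
definition shape_op :: "'e::euclidean_space set \<Rightarrow> 'e \<Rightarrow> 'e \<Rightarrow> 'e \<Rightarrow> 'e" where
  "shape_op N p X v = frechet_derivative (\<lambda>q. tangent_proj N q v) (at p within N) X"

text \<open>Riemann curvature of N (Gauss equation):
  R(X,Y)Z = P (A_X A_Y Z - A_Y A_X Z), convention
  R(X,Y) = nabla_X nabla_Y - nabla_Y nabla_X - nabla_[X,Y].\<close>
definition curvature :: "'e::euclidean_space set \<Rightarrow> 'e \<Rightarrow> 'e \<Rightarrow> 'e \<Rightarrow> 'e \<Rightarrow> 'e" where
  "curvature N p X Y Z =
     tangent_proj N p (shape_op N p X (shape_op N p Y Z) - shape_op N p Y (shape_op N p X Z))"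

definition onb :: "'e::euclidean_space set \<Rightarrow> 'e set" where
  "onb T = (SOME B. B \<subseteq> T \<and> pairwise orthogonal B \<and> (\<forall>x\<in>B. norm x = 1) \<and> span B = T)"

text \<open>Spinors on S^1: Sigma S^1 is the trivial complex line bundle, spinors are
complex functions; Clifford multiplication by d/ds is multiplication by i.
An element of Sigma S^1 (x) gamma^{-1} TN at s is represented by a pair
(u, w) of tangent vectors at gamma s, standing for 1 (x) u + i (x) w.\<close>

definition tensor :: "complex \<Rightarrow> 'e::real_vector \<Rightarrow> 'e \<times> 'e" where
  "tensor z v = (Re z *\<^sub>R v, Im z *\<^sub>R v)"

text \<open>Clifford multiplication by d/ds (multiplication by i) on the twisted bundle.\<close>
definition cliff :: "'e::real_vector \<times> 'e \<Rightarrow> 'e \<times> 'e" where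
  "cliff x = (- snd x, fst x)"

definition cov_deriv :: "'e::euclidean_space set \<Rightarrow> (real \<Rightarrow> 'e) \<Rightarrow> (real \<Rightarrow> 'e) \<Rightarrow> real \<Rightarrow> 'e" where
  "cov_deriv N \<gamma> V s = tangent_proj N (\<gamma> s) (vector_derivative V (at s))"

definition twisted_dirac ::
  "'e::euclidean_space set \<Rightarrow> (real \<Rightarrow> 'e) \<Rightarrow> (real \<Rightarrow> 'e \<times> 'e) \<Rightarrow> real \<Rightarrow> 'e \<times> 'e" where
  "twisted_dirac N \<gamma> \<psi> s =
     cliff (cov_deriv N \<gamma> (\<lambda>t. fst (\<psi> t)) s, cov_deriv N \<gamma> (\<lambda>t. snd (\<psi> t)) s)"

definition untwisted_dirac :: "(real \<Rightarrow> complex) \<Rightarrow> real \<Rightarrow> complex" where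
  "untwisted_dirac chi s = \<i> * vector_derivative chi (at s)"

definition tension :: "'e::euclidean_space set \<Rightarrow> (real \<Rightarrow> 'e) \<Rightarrow> real \<Rightarrow> 'e" where
  "tension N \<gamma> s =
     tangent_proj N (\<gamma> s) (vector_derivative (\<lambda>t. vector_derivative \<gamma> (at t)) (at s))"

text \<open>R(gamma,psi) = 1/2 R^N(d/ds . psi, psi) gamma', i.e. with psi = sum_b psi^b (x) b
over an orthonormal basis b of T_{gamma s} N:
  1/2 sum_{b,b'} <d/ds . psi^b, psi^b'> R^N(b,b') gamma',
<z,z'> = Re (z * cnj z') the real inner product on spinors.\<close>
definition curv_term ::
  "'e::euclidean_space set \<Rightarrow> (real \<Rightarrow> 'e) \<Rightarrow> (real \<Rightarrow> 'e \<times> 'e) \<Rightarrow> real \<Rightarrow> 'e" where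
  "curv_term N \<gamma> \<psi> s =
     (let B = onb (tangent_space N (\<gamma> s));
          c = (\<lambda>b. Complex (fst (\<psi> s) \<bullet> b) (snd (\<psi> s) \<bullet> b))
      in (1/2) *\<^sub>R (\<Sum>b\<in>B. \<Sum>b'\<in>B.
            Re ((\<i> * c b) * cnj (c b')) *\<^sub>R
              curvature N (\<gamma> s) b b' (vector_derivative \<gamma> (at s))))"

end

theory Submission imports Defs begin

lemma tangent_cone:
  assumes "x \<in> tangent_space N p"
  shows "t *\<^sub>R x \<in> tangent_space N p"
proof -
  obtain c where c: "\<forall>t. c t \<in> N" "c 0 = p" "(c has_vector_derivative x) (at 0)"
    using assms unfolding tangent_space_def by blast
  have d: "((\<lambda>s. t * s) has_vector_derivative t) (at 0)"
    by (auto intro!: derivative_eq_intros simp: has_real_derivative_iff_has_vector_derivative[symmetric])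
  have "((c \<circ> (\<lambda>s. t * s)) has_vector_derivative (t *\<^sub>R x)) (at 0)"
    using vector_diff_chain_at[OF d] c(3) by simp
  then have "((\<lambda>s. c (t * s)) has_vector_derivative (t *\<^sub>R x)) (at 0)" by (simp add: o_def)
  then show ?thesis unfolding tangent_space_def using c
    by (intro CollectI exI[of _ "\<lambda>s. c (t * s)"]) auto
qed

lemma first_deriv:
  assumes "smooth_on UNIV f"
  shows "f differentiable at x"
  using assms unfolding smooth_on_def
  by (metis Ck_on.simps(2) differentiable_on_def iso_tuple_UNIV_I at_within_open open_UNIV)

lemma fd_vd:
  fixes f :: "real \<Rightarrow> 'b::real_normed_vector"
  assumes "f differentiable at x"
  shows "frechet_derivative f (at x) 1 = vector_derivative f (at x)"
proof -
  have "(f has_derivative frechet_derivative f (at x)) (at x)"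
    using assms frechet_derivative_works by blast
  moreover have "(f has_derivative (\<lambda>h. h *\<^sub>R vector_derivative f (at x))) (at x)"
    using assms vector_derivative_works has_vector_derivative_def by blast
  ultimately have "frechet_derivative f (at x) = (\<lambda>h. h *\<^sub>R vector_derivative f (at x))"
    using has_derivative_unique by blast
  then show ?thesis by simp
qed

lemma second_deriv:
  fixes f :: "real \<Rightarrow> 'b::real_normed_vector"
  assumes "smooth_on UNIV f"
  shows "(\<lambda>t. vector_derivative f (at t)) differentiable at x"
proof -
  have "Ck_on 2 UNIV f" using assms unfolding smooth_on_def by blast
  then have "Ck_on 1 UNIV (\<lambda>x. frechet_derivative f (at x) 1)"
    by (simp add: numeral_2_eq_2)
  then have "(\<lambda>x. frechet_derivative f (at x) 1) differentiable at x"
    by (simp add: differentiable_on_def)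
  moreover have "(\<lambda>x. frechet_derivative f (at x) 1) = (\<lambda>t. vector_derivative f (at t))"
    using fd_vd first_deriv[OF assms] by auto
  ultimately show ?thesis by simp
qed

lemma orth_of_min:
  fixes v x :: "'e::euclidean_space"
  assumes "\<forall>t::real. norm v \<le> norm (v - t *\<^sub>R x)"
  shows "v \<bullet> x = 0"
proof (cases "x = 0")
  case True then show ?thesis by simp
next
  case False
  define t where "t = (v \<bullet> x) / (x \<bullet> x)"
  have xx: "x \<bullet> x > 0" using False by simp
  have "norm v ^ 2 \<le> norm (v - t *\<^sub>R x) ^ 2" using assms by (simp add: power_mono)
  also have "\<dots> = v \<bullet> v - 2 * t * (v \<bullet> x) + t^2 * (x \<bullet> x)"
    by (simp only: power2_norm_eq_inner) (simp add: inner_diff_left inner_diff_right inner_commute algebra_simps power2_eq_square)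
  also have "\<dots> = v \<bullet> v - (v \<bullet> x)^2 / (x \<bullet> x)"
    using xx unfolding t_def by (simp add: field_simps power2_eq_square)
  finally have "(v \<bullet> x)^2 / (x \<bullet> x) \<le> 0" by (simp add: power2_norm_eq_inner)
  then have "(v \<bullet> x)^2 \<le> 0" using xx by (simp add: divide_le_0_iff)
  then show ?thesis by simp
qed

lemma cp_scale:
  fixes T :: "'e::euclidean_space set"
  assumes cone: "\<And>x t. x \<in> T \<Longrightarrow> (t::real) *\<^sub>R x \<in> T"
    and cp: "closest_point T v = 0"
  shows "closest_point T (a *\<^sub>R v) = 0"
proof -
  define P where "P = (\<lambda>u y. y \<in> T \<and> (\<forall>x\<in>T. dist u y \<le> dist u x))"
  have cpP: "closest_point T u = (SOME y. P u y)" for u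
    unfolding closest_point_def P_def by simp
  show ?thesis
  proof (cases "T = {}")
    case True
    then have "P (a *\<^sub>R v) = P v" unfolding P_def by auto
    then show ?thesis using cp cpP by metis
  next
    case Tne: False
    then obtain x0 where "x0 \<in> T" by blast
    then have T0: "0 \<in> T" using cone[of x0 0] by simp
    show ?thesis
    proof (cases "a = 0")
      case True
      have "P 0 0" unfolding P_def using T0 by simp
      then have "P 0 (SOME y. P 0 y)" by (rule someI)
      then have "(SOME y. P 0 y) = 0" unfolding P_def using T0 by fastforce
      then show ?thesis using True cpP by simp
    next
      case anz: False
      show ?thesis
      proof (cases "\<exists>y. P v y")
        case False
        have "\<not> P (a *\<^sub>R v) y" for y
        proof
          assume Py: "P (a *\<^sub>R v) y"
          have "P v (inverse a *\<^sub>R y)"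
            unfolding P_def
          proof (intro conjI ballI)
            show "inverse a *\<^sub>R y \<in> T" using Py cone unfolding P_def by blast
          next
            fix x assume "x \<in> T"
            then have "a *\<^sub>R x \<in> T" using cone by blast
            then have "dist (a *\<^sub>R v) y \<le> dist (a *\<^sub>R v) (a *\<^sub>R x)" using Py unfolding P_def by blast
            also have "dist (a *\<^sub>R v) y = \<bar>a\<bar> * dist v (inverse a *\<^sub>R y)"
            proof -
              have "a *\<^sub>R v - y = a *\<^sub>R (v - inverse a *\<^sub>R y)" using anz by (simp add: algebra_simps)
              then show ?thesis by (simp add: dist_norm)
            qed
            also have "dist (a *\<^sub>R v) (a *\<^sub>R x) = \<bar>a\<bar> * dist v x"
              by (simp add: dist_norm flip: scaleR_diff_right)
            finally show "dist v (inverse a *\<^sub>R y) \<le> dist v x" using anz by simp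
          qed
          then show False using False by blast
        qed
        then have "P (a *\<^sub>R v) = P v" using False by (auto intro!: ext)
        then show ?thesis using cp cpP by metis
      next
        case True
        then have "P v (SOME y. P v y)" by (rule someI_ex)
        then have P0: "P v 0" using cp cpP by simp
        have orth: "v \<bullet> x = 0" if "x \<in> T" for x
        proof (rule orth_of_min, rule allI)
          fix t :: real
          have "t *\<^sub>R x \<in> T" using cone that by blast
          then show "norm v \<le> norm (v - t *\<^sub>R x)" using P0 unfolding P_def by (simp add: dist_norm)
        qed
        have nrm: "norm (a *\<^sub>R v - y) ^ 2 = norm (a *\<^sub>R v) ^ 2 + norm y ^ 2" if "y \<in> T" for y
          using orth[OF that]
          by (simp only: power2_norm_eq_inner) (simp add: inner_diff_left inner_diff_right inner_commute algebra_simps power2_eq_square)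
        have "P (a *\<^sub>R v) 0" unfolding P_def
        proof (intro conjI ballI)
          show "0 \<in> T" by (rule T0)
        next
          fix x assume "x \<in> T"
          then have "norm (a *\<^sub>R v) ^ 2 \<le> norm (a *\<^sub>R v - x) ^ 2" using nrm by simp
          then show "dist (a *\<^sub>R v) 0 \<le> dist (a *\<^sub>R v) x"
            by (simp add: dist_norm power_mono_iff del: norm_scaleR)
        qed
        then have Pa: "P (a *\<^sub>R v) (SOME y. P (a *\<^sub>R v) y)" by (rule someI)
        define y where "y = (SOME y. P (a *\<^sub>R v) y)"
        have yT: "y \<in> T" and "dist (a *\<^sub>R v) y \<le> dist (a *\<^sub>R v) 0"
          using Pa T0 unfolding P_def y_def by auto
        then have "norm (a *\<^sub>R v - y) ^ 2 \<le> norm (a *\<^sub>R v) ^ 2"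
          by (simp add: dist_norm power_mono del: norm_scaleR)
        then have "y = 0" using nrm[OF yT] by simp
        then show ?thesis using cpP y_def by simp
      qed
    qed
  qed
qed

theorem mainTheorem3:
  fixes N :: "'e::euclidean_space set"
    and \<gamma> :: "real \<Rightarrow> 'e"
    and chi :: "real \<Rightarrow> complex"
    and \<psi> :: "real \<Rightarrow> 'e \<times> 'e"
    and \<epsilon> :: complex
  assumes N: "compact N" "smooth_submanifold N"
    and \<gamma>: "\<forall>s. \<gamma> s \<in> N" "smooth_on UNIV \<gamma>" "\<forall>s. \<gamma> (s + 2 * pi) = \<gamma> s"
    and geodesic: "\<forall>s. tension N \<gamma> s = 0"
    and spin: "\<epsilon> = 1 \<or> \<epsilon> = -1" "\<forall>s. chi (s + 2 * pi) = \<epsilon> * chi s"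
    and chi_smooth: "smooth_on UNIV chi"
    and harmonic: "\<forall>s. untwisted_dirac chi s = 0"
    and \<psi>: "\<forall>s. \<psi> s = tensor (\<i> * chi s) (vector_derivative \<gamma> (at s))"
  shows "(\<forall>s. tension N \<gamma> s = curv_term N \<gamma> \<psi> s) \<and> (\<forall>s. twisted_dirac N \<gamma> \<psi> s = 0)"
proof -
  let ?g = "\<lambda>t. vector_derivative \<gamma> (at t)"
  have cd: "(chi has_vector_derivative 0) (at s within UNIV)" for s
  proof -
    have "chi differentiable at s" using first_deriv chi_smooth by blast
    moreover have "vector_derivative chi (at s) = 0"
      using harmonic unfolding untwisted_dirac_def by simp
    ultimately show ?thesis using vector_derivative_works[of chi "at s"] by simp
  qed
  obtain c where c0: "\<And>x. x \<in> UNIV \<Longrightarrow> chi x = c"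
    using has_vector_derivative_zero_constant[OF convex_UNIV cd] by metis
  have c: "chi x = c" for x using c0 by simp
  define A where "A = Re (\<i> * c)"
  define B where "B = Im (\<i> * c)"
  have psi: "\<psi> t = (A *\<^sub>R ?g t, B *\<^sub>R ?g t)" for t
    using \<psi> c unfolding tensor_def A_def B_def by simp
  have gd: "?g differentiable at s" for s using second_deriv \<gamma>(2) by blast
  have proj: "tangent_proj N (\<gamma> s) (vector_derivative (\<lambda>t. a *\<^sub>R ?g t) (at s)) = 0" for a s
  proof -
    have "vector_derivative (\<lambda>t. a *\<^sub>R ?g t) (at s) = a *\<^sub>R vector_derivative ?g (at s)"
      using gd[of s] by simp
    moreover have "closest_point (tangent_space N (\<gamma> s)) (vector_derivative ?g (at s)) = 0"
      using geodesic unfolding tension_def tangent_proj_def by simp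
    moreover have "closest_point (tangent_space N (\<gamma> s)) (a *\<^sub>R vector_derivative ?g (at s)) = 0"
      by (rule cp_scale[OF tangent_cone]) (use calculation in auto)
    ultimately show ?thesis unfolding tangent_proj_def by simp
  qed
  have D: "twisted_dirac N \<gamma> \<psi> s = 0" for s
    unfolding twisted_dirac_def cov_deriv_def psi fst_conv snd_conv proj cliff_def by (simp add: zero_prod_def)
  have C: "curv_term N \<gamma> \<psi> s = 0" for s
    unfolding curv_term_def psi Let_def by (simp add: A_def B_def algebra_simps)
  show ?thesis using C D geodesic by simp
qed

end
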